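(* Let $\mathbf a=(a_1,\dots,a_n)$ be a sequence of integers with $a_1+\cdots+a_n=1$, viewed as a lattice path $p$ with steps $(1,a_1),\dots,(1,a_n)$ from $(0,0)$ to $(n,1)$, with vertices $P_0,\dots,P_n$. Let $T\subseteq\{0,1,\dots,n-1\}$ be a set of $k\ge 1$ indices (the positions of the special vertices of $p$; the last vertex $P_n$ is not special). For $t\in T$, the conjugate $\sigma^t(p)$ has as special vertices its vertices in positions $m\in\{0,\dots,n-1\}$ with $(t+m)\bmod n\in T$ (so special vertices are carried along by cyclic shifting), and in particular $\sigma^t(p)$ starts with a special vertex. Let $X(\sigma^t(p))$ be the number of special vertices of $\sigma^t(p)$ lying on or below the $x$-axis, i.e. the number of $m\in\{0,\dots,n-1\}$ with $(t+m)\bmod n\in T$ and $a_{t+1}+a_{t+2}+\cdots+a_{t+m}\le 0$ (indices of $a$ taken modulo $n$). Then $$\{X(\sigma^{t}(p)) : t\in T\}=\{1,2,\dots,k\}.$$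
   Context: The conjugate $\sigma^t(p)$ is the path with step sequence $(a_{t+1},\dots,a_n,a_1,\dots,a_t)$ starting at the origin; its vertex in position $m$ corresponds to vertex $P_{t+m \bmod n}$ of $p$. *)

theory Defs
  imports Main
begin

text \<open>Steps a_1..a_n are given as a function a on indices 1..n; index j of the
  cyclic sequence is read modulo n (representatives 1..n).\<close>

definition cyc_step :: "(nat \<Rightarrow> int) \<Rightarrow> nat \<Rightarrow> nat \<Rightarrow> int" where
  "cyc_step a n j = a (((j - 1) mod n) + 1)"

definition conj_height :: "(nat \<Rightarrow> int) \<Rightarrow> nat \<Rightarrow> nat \<Rightarrow> nat \<Rightarrow> int" where
  "conj_height a n t m = (\<Sum>i = 1..m. cyc_step a n (t + i))"

definition X_count :: "(nat \<Rightarrow> int) \<Rightarrow> nat \<Rightarrow> nat set \<Rightarrow> nat \<Rightarrow> nat" where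
  "X_count a n T t = card {m. m < n \<and> (t + m) mod n \<in> T \<and> conj_height a n t m \<le> 0}"

end

theory Submission
  imports Defs
begin

definition Hs :: "(nat \<Rightarrow> int) \<Rightarrow> nat \<Rightarrow> nat \<Rightarrow> int" where
  "Hs a n j = (\<Sum>i = 1..j. cyc_step a n i)"

lemma Hs_Suc: "Hs a n (Suc j) = Hs a n j + cyc_step a n (Suc j)"
  by (simp add: Hs_def)

lemma conj_height_Hs: "Hs a n (t + m) = Hs a n t + conj_height a n t m"
  by (induction m) (simp_all add: conj_height_def Hs_Suc)

lemma cyc_step_period: "i \<ge> 1 \<Longrightarrow> cyc_step a n (i + n) = cyc_step a n i"
proof -
  assume "i \<ge> 1"
  then have "i + n - 1 = (i - 1) + n" by simp
  then show ?thesis by (simp add: cyc_step_def)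
qed

lemma Hs_n:
  assumes "(\<Sum>i = 1..n. a i) = 1"
  shows "Hs a n n = 1"
proof -
  have "Hs a n n = (\<Sum>i = 1..n. a i)"
    unfolding Hs_def cyc_step_def
  proof (rule sum.cong)
    fix i assume "i \<in> {1..n}"
    then have "i - 1 < n" by auto
    then have "(i - 1) mod n + 1 = i" using \<open>i \<in> {1..n}\<close> by auto
    then show "a ((i - 1) mod n + 1) = a i" by simp
  qed simp
  with assms show ?thesis by simp
qed

lemma Hs_period:
  assumes "(\<Sum>i = 1..n. a i) = 1"
  shows "Hs a n (j + n) = Hs a n j + 1"
proof (induction j)
  case 0 then show ?case using Hs_n[OF assms] by (simp add: Hs_def)
next
  case (Suc j)
  have "Hs a n (Suc j + n) = Hs a n (j + n) + cyc_step a n (Suc j + n)"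
    using Hs_Suc[of a n "j + n"] by simp
  also have "cyc_step a n (Suc j + n) = cyc_step a n (Suc j)"
    by (rule cyc_step_period) simp
  finally show ?case using Suc Hs_Suc[of a n j] by simp
qed

lemma mod_small2: "t < n \<Longrightarrow> m < (n::nat) \<Longrightarrow> (t + m) mod n = (if t + m < n then t + m else t + m - n)"
  by (simp add: mod_if)

lemma rank_image:
  fixes f :: "nat \<Rightarrow> int"
  assumes fin: "finite T" and inj: "inj_on f T"
  shows "(\<lambda>t. card {s\<in>T. f s \<le> f t}) ` T = {1..card T}"
proof -
  define r where "r t = card {s\<in>T. f s \<le> f t}" for t
  have r_range: "r t \<in> {1..card T}" if "t \<in> T" for t
  proof -
    have "{s\<in>T. f s \<le> f t} \<noteq> {}" using that by auto
    then have "card {s\<in>T. f s \<le> f t} \<ge> 1" using fin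
      by (simp add: Suc_leI card_gt_0_iff)
    moreover have "card {s\<in>T. f s \<le> f t} \<le> card T" using fin by (intro card_mono) auto
    ultimately show ?thesis by (simp add: r_def)
  qed
  have less: "r s < r t" if "s \<in> T" "t \<in> T" "f s < f t" for s t
  proof -
    have "{s'\<in>T. f s' \<le> f s} \<subset> {s'\<in>T. f s' \<le> f t}"
      using that by force
    then show ?thesis unfolding r_def using fin by (intro psubset_card_mono) auto
  qed
  have "inj_on r T"
  proof (rule inj_onI)
    fix s t assume st: "s \<in> T" "t \<in> T" "r s = r t"
    show "s = t"
    proof (rule ccontr)
      assume "s \<noteq> t"
      then have "f s \<noteq> f t" using inj st by (meson inj_onD)
      then consider "f s < f t" | "f t < f s" by linarith
      then show False using less st by (metis less_irrefl)
    qed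
  qed
  then have "card (r ` T) = card T" by (simp add: card_image)
  moreover have "r ` T \<subseteq> {1..card T}" using r_range by auto
  ultimately have "r ` T = {1..card T}"
    by (intro card_subset_eq) auto
  then show ?thesis by (simp add: r_def)
qed

theorem theorem4:
  fixes a :: "nat \<Rightarrow> int" and n k :: nat and T :: "nat set"
  assumes sum1: "(\<Sum>i = 1..n. a i) = 1"
    and T_sub: "T \<subseteq> {0..<n}"
    and card_T: "card T = k"
    and k_pos: "k \<ge> 1"
  shows "(\<lambda>t. X_count a n T t) ` T = {1..k}"
proof -
  define H where "H = Hs a n"
  define key where "key s = H s * int n - int s" for s
  have finT: "finite T" using T_sub finite_subset by blast
  have k1: "key s < key t" if "s < n" "t < n" "H s < H t" for s t
  proof -
    have "(H s + 1) * int n \<le> H t * int n"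
      using that by (intro mult_right_mono) auto
    then show ?thesis using that by (simp add: key_def algebra_simps)
  qed
  have k2: "key s \<le> key t \<longleftrightarrow> t \<le> s" if "H s = H t" for s t
    using that by (auto simp: key_def)
  have keyiff: "key s \<le> key t \<longleftrightarrow> H s < H t \<or> (H s = H t \<and> t \<le> s)"
    if "s < n" "t < n" for s t
    using k1[OF that] k1[OF that(2,1)] k2[of s t] by (cases "H s < H t"; cases "H t < H s") auto
  have inj: "inj_on key T"
  proof (rule inj_onI)
    fix s t assume "s \<in> T" "t \<in> T" "key s = key t"
    then have "s < n" "t < n" using T_sub by auto
    then show "s = t" using keyiff[of s t] keyiff[of t s] \<open>key s = key t\<close> by auto
  qed
  have X: "X_count a n T t = card {s\<in>T. key s \<le> key t}" if tT: "t \<in> T" for t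
  proof -
    have tn: "t < n" using tT T_sub by auto
    define A where "A = {m. m < n \<and> (t + m) mod n \<in> T \<and> conj_height a n t m \<le> 0}"
    have A': "A = {m. m < n \<and> (t + m) mod n \<in> T \<and> H (t + m) \<le> H t}"
      unfolding A_def H_def using conj_height_Hs[of a n t] by (auto simp: algebra_simps)
    define g where "g m = (t + m) mod n" for m
    have ginj: "inj_on g A"
    proof (rule inj_onI)
      fix m1 m2 assume "m1 \<in> A" "m2 \<in> A" "g m1 = g m2"
      then show "m1 = m2" using mod_small2[OF tn, of m1] mod_small2[OF tn, of m2]
        unfolding A' g_def by (auto split: if_splits)
    qed
    have per: "H (j + n) = H j + 1" for j unfolding H_def using Hs_period[OF sum1] .
    have "g ` A = {s\<in>T. key s \<le> key t}"
    proof
      show "g ` A \<subseteq> {s\<in>T. key s \<le> key t}"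
      proof
        fix s assume "s \<in> g ` A"
        then obtain m where m: "m \<in> A" "s = g m" by auto
        then have mn: "m < n" and sT: "s \<in> T" and hh: "H (t + m) \<le> H t"
          unfolding A' g_def by auto
        have sn: "s < n" using sT T_sub by auto
        show "s \<in> {s\<in>T. key s \<le> key t}"
        proof (cases "t + m < n")
          case True
          then have "s = t + m" using m mod_small2[OF tn mn] by (simp add: g_def)
          then show ?thesis using sT hh keyiff[OF sn tn] by auto
        next
          case False
          then have "s = t + m - n" using m mod_small2[OF tn mn] by (simp add: g_def)
          then have "t + m = s + n" "s < t" using False mn by auto
          then show ?thesis using sT hh keyiff[OF sn tn] per[of s] by auto
        qed
      qed
    next
      show "{s\<in>T. key s \<le> key t} \<subseteq> g ` A"
      proof
        fix s assume "s \<in> {s\<in>T. key s \<le> key t}"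
        then have sT: "s \<in> T" and ks: "key s \<le> key t" by auto
        have sn: "s < n" using sT T_sub by auto
        show "s \<in> g ` A"
        proof (cases "t \<le> s")
          case True
          define m where "m = s - t"
          have e: "t + m = s" using True by (simp add: m_def)
          have "m \<in> A" using e sn sT ks keyiff[OF sn tn] unfolding A' by auto
          moreover have "g m = s" using e sn by (simp add: g_def)
          ultimately show ?thesis by force
        next
          case False
          define m where "m = s + n - t"
          have e: "t + m = s + n" using tn by (simp add: m_def)
          have mn: "m < n" using False sn tn by (simp add: m_def)
          have "H s < H t" using keyiff[OF sn tn] ks False by auto
          then have "m \<in> A" using e mn sT sn per[of s] unfolding A' by auto
          moreover have "g m = s" using e sn by (simp add: g_def)
          ultimately show ?thesis by force
        qed
      qed
    qed
    then have "card A = card {s\<in>T. key s \<le> key t}"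
      using card_image[OF ginj] by simp
    then show ?thesis by (simp add: X_count_def A_def)
  qed
  have "(\<lambda>t. X_count a n T t) ` T = (\<lambda>t. card {s\<in>T. key s \<le> key t}) ` T"
    using X by (intro image_cong) auto
  also have "\<dots> = {1..card T}" by (rule rank_image[OF finT inj])
  finally show ?thesis using card_T by simp
qed

end
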